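(* For all integers $n,k\ge 0$ and every real (or complex) $x\neq 1$, \[ \sum_{d=0}^k d^n x^d = \sum_{i=0}^n \frac{e_{n,i}\, x^i - e_{n,i}^k\, x^{k+i+1}}{(1-x)^{n+1}}. \]
   Context: Convention: $0^0=1$. The Eulerian numbers $e_{n,i}$ are defined by $e_{0,0}=1$, $e_{n,i}=0$ whenever $i\le 0$ (unless $n=i=0$) or $i>n$, and $e_{n,i}=i\,e_{n-1,i}+(n-i+1)\,e_{n-1,i-1}$ for all other integers $n,i$. For a fixed integer parameter $k$, the numbers $e^k_{n,i}$ are defined by $e^k_{0,0}=1$, $e^k_{n,i}=0$ whenever $i<0$ or $i>n$, and $e^k_{n,i}=(k+i+1)\,e^k_{n-1,i}+(n-k-i)\,e^k_{n-1,i-1}$ for all other integers $n,i$. *)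

theory Defs
  imports Complex_Main
begin

fun eulerian :: "nat \<Rightarrow> int \<Rightarrow> int" where
  "eulerian 0 i = (if i = 0 then 1 else 0)"
| "eulerian (Suc m) i =
     (if i \<le> 0 \<or> i > int (Suc m) then 0
      else i * eulerian m i + (int (Suc m) - i + 1) * eulerian m (i - 1))"

fun eulerian_k :: "int \<Rightarrow> nat \<Rightarrow> int \<Rightarrow> int" where
  "eulerian_k k 0 i = (if i = 0 then 1 else 0)"
| "eulerian_k k (Suc m) i =
     (if i < 0 \<or> i > int (Suc m) then 0
      else (k + i + 1) * eulerian_k k m i + (int (Suc m) - k - i) * eulerian_k k m (i - 1))"

end

theory Submission
  imports Defs
begin

lemma ek_out: "i < 0 \<or> i > int m \<Longrightarrow> eulerian_k k m i = 0"
  by (cases m) auto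

lemma ek_rec: "eulerian_k k (Suc m) i = (k+i+1) * eulerian_k k m i
   + (int (Suc m) - k - i) * eulerian_k k m (i-1)"
proof (cases "i < 0 \<or> i > int (Suc m)")
  case True
  then have "eulerian_k k m i = 0" "eulerian_k k m (i-1) = 0" by (auto intro: ek_out)
  with True show ?thesis by simp
next
  case False
  then show ?thesis by simp
qed

lemma eul_eq: "eulerian n i = eulerian_k (-1) n i"
proof (induction n arbitrary: i)
  case 0
  then show ?case by simp
next
  case (Suc m)
  show ?case
  proof (cases "i \<le> 0")
    case True
    then show ?thesis using ek_out[of "i-1" m "-1"] by (cases "i = 0") auto
  next
    case False
    then show ?thesis using Suc by simp
  qed
qed

lemma binom_aux: "int (Suc j) * int (Suc n choose Suc j) = (int n + 1 - int j) * int (Suc n choose j)"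
proof (cases "j \<le> Suc n")
  case True
  have a: "Suc j * (Suc n choose Suc j) = Suc n * (n choose j)" by (rule Suc_times_binomial)
  have b: "(Suc n - j) * (Suc n choose j) = Suc n * (n choose j)"
    using binomial_absorb_comp[of "Suc n" j] by simp
  have "int (Suc j) * int (Suc n choose Suc j) = int (Suc n - j) * int (Suc n choose j)"
    using a b by (metis of_nat_mult)
  moreover have "int (Suc n - j) = int n + 1 - int j" using True by simp
  ultimately show ?thesis by simp
next
  case False
  then have "Suc n choose Suc j = 0" "Suc n choose j = 0" by (auto intro: binomial_eq_0)
  then show ?thesis by (simp only: of_nat_0 mult_zero_right)
qed

lemma lin_aux: "(a::int) * A - b * B = c * (A + B) \<Longrightarrow>
  a * (d * (-1) * A) + b * (d * B) = (c * d) * (-1) * (A + B)"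
proof -
  assume h: "a * A - b * B = c * (A + B)"
  have "a * (d * (-1) * A) + b * (d * B) = - d * (a * A - b * B)" by (simp add: algebra_simps)
  also have "... = (c * d) * (-1) * (A + B)" using h by simp
  finally show ?thesis .
qed

lemma coef: "eulerian_k k n i - eulerian_k (k+1) n (i-1)
   = (if i < 0 then 0 else (k+1)^n * (-1)^nat i * int (Suc n choose nat i))"
proof (induction n arbitrary: i)
  case 0
  then show ?case
    by (cases "i = 0"; cases "i = 1") (auto simp: nat_eq_iff)
next
  case (Suc m)
  have r: "eulerian_k k (Suc m) i - eulerian_k (k+1) (Suc m) (i-1)
     = (k+i+1) * (eulerian_k k m i - eulerian_k (k+1) m (i-1))
       + (int (Suc m) - k - i) * (eulerian_k k m (i-1) - eulerian_k (k+1) m (i-1-1))"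
    unfolding ek_rec[of k m] ek_rec[of "k+1" m] by (simp add: algebra_simps)
  show ?case
  proof (cases "i < 0")
    case True
    then show ?thesis unfolding r Suc by simp
  next
    case False
    show ?thesis
    proof (cases "i = 0")
      case True
      then show ?thesis unfolding r Suc by (simp add: algebra_simps)
    next
      case False
      with \<open>\<not> i < 0\<close> have j: "i = int (nat i - 1) + 1" by simp
      define j where "j = nat i - 1"
      note j = j[folded j_def]
      have nj: "nat i = Suc j" "nat (i - 1) = j" using j by auto
      have bs: "int (Suc (Suc m) choose Suc j) = int (Suc m choose Suc j) + int (Suc m choose j)" by simp
      have e: "(k+i+1) * ((k+1)^m * (-1)^Suc j * int (Suc m choose Suc j))
           + (int (Suc m) - k - i) * ((k+1)^m * (-1)^j * int (Suc m choose j))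
         = (k+1)^Suc m * (-1)^Suc j * int (Suc (Suc m) choose Suc j)"
      proof -
        have "(k+i+1) * int (Suc m choose Suc j) - (int (Suc m) - k - i) * int (Suc m choose j)
            = (k+1) * (int (Suc m choose Suc j) + int (Suc m choose j))"
          using binom_aux[of j m] j by (simp add: algebra_simps)
        then show ?thesis unfolding bs
          using lin_aux[of "k+i+1" "int (Suc m choose Suc j)" "int (Suc m) - k - i" "int (Suc m choose j)" "k+1" "(k+1)^m * (-1)^j"]
          by (simp add: mult_ac)
      qed
      show ?thesis unfolding r Suc using j nj e by simp
    qed
  qed
qed

lemma aux_a: fixes x :: "'a::comm_ring_1"
  assumes "e1 - e2 = (c::int)" shows "of_int e1 * x ^ i - of_int e2 * x ^ i = of_int c * x ^ i"
proof -
  have "of_int e1 * x ^ i - of_int e2 * x ^ i = (of_int e1 - of_int e2) * x ^ i" by (simp add: left_diff_distrib)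
  also have "... = of_int c * x ^ i" using assms by (metis of_int_diff)
  finally show ?thesis .
qed
lemma aux_b: fixes x :: "'a::comm_ring_1"
  shows "of_int ((k+1)^n) * (of_nat (Suc n choose i) * (-x)^i * 1^(Suc n - i)) = of_int ((k+1)^n * (-1)^i * int (Suc n choose i)) * x^i"
proof -
  have "(-x)^i = (-1)^i * x^i" by (rule power_minus)
  then show ?thesis by (simp add: of_int_mult mult.assoc mult.left_commute)
qed

lemma L1:
  fixes x :: "'a::comm_ring_1"
  shows "(\<Sum>i=0..n. of_int (eulerian_k k n (int i)) * x^i)
     - x * (\<Sum>i=0..n. of_int (eulerian_k (k+1) n (int i)) * x^i)
     = of_int ((k+1)^n) * (1-x)^Suc n"
proof -
  have s1: "(\<Sum>i=0..n. of_int (eulerian_k k n (int i)) * x^i)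
      = (\<Sum>i=0..Suc n. of_int (eulerian_k k n (int i)) * x^i)"
  proof -
    have "eulerian_k k n (int (Suc n)) = 0" by (rule ek_out) simp
    then show ?thesis by (simp add: sum.atLeast0_atMost_Suc)
  qed
  have s2: "x * (\<Sum>i=0..n. of_int (eulerian_k (k+1) n (int i)) * x^i)
      = (\<Sum>i=0..Suc n. of_int (eulerian_k (k+1) n (int i - 1)) * x^i)"
      proof -
    have "eulerian_k (k+1) n (-1) = 0" by (rule ek_out) simp
    then have "(\<Sum>i=0..Suc n. of_int (eulerian_k (k+1) n (int i - 1)) * x^i)
       = (\<Sum>i=0..n. of_int (eulerian_k (k+1) n (int (Suc i) - 1)) * x^(Suc i))"
      unfolding sum.atLeast0_atMost_Suc_shift by simp
    also have "... = (\<Sum>i=0..n. x * (of_int (eulerian_k (k+1) n (int i)) * x^i))"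
      by (rule sum.cong[OF refl]) (simp add: mult.left_commute)
    finally show ?thesis by (simp add: sum_distrib_left)
  qed
  have s3: "(\<Sum>i=0..Suc n. of_int (eulerian_k k n (int i)) * x^i)
      - (\<Sum>i=0..Suc n. of_int (eulerian_k (k+1) n (int i - 1)) * x^i)
      = (\<Sum>i=0..Suc n. of_int ((k+1)^n * (-1)^i * int (Suc n choose i)) * x^i)"
    unfolding sum_subtractf[symmetric]
  proof (rule sum.cong[OF refl])
    fix i assume "i \<in> {0..Suc n}"
    have "eulerian_k k n (int i) - eulerian_k (k+1) n (int i - 1) = (k+1)^n * (-1)^i * int (Suc n choose i)"
      using coef[of k n "int i"] by simp
    then show "of_int (eulerian_k k n (int i)) * x ^ i - of_int (eulerian_k (k + 1) n (int i - 1)) * x ^ i =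
         of_int ((k + 1) ^ n * (- 1) ^ i * int (Suc n choose i)) * x ^ i"
      by (rule aux_a)
  qed
  have b: "(1-x)^Suc n = (\<Sum>i\<le>Suc n. of_nat (Suc n choose i) * (-x)^i * 1^(Suc n - i))"
    using binomial_ring[of "-x" 1 "Suc n"] by simp
  have s4: "of_int ((k+1)^n) * (1-x)^Suc n
     = (\<Sum>i=0..Suc n. of_int ((k+1)^n * (-1)^i * int (Suc n choose i)) * x^i)"
    unfolding b sum_distrib_left atLeast0AtMost
    by (rule sum.cong[OF refl]) (rule aux_b)
  show ?thesis unfolding s1 s2 s3 s4 ..
qed

lemma main_ring:
  fixes x :: "'a::comm_ring_1"
  shows "(1-x)^Suc n * (\<Sum>d=0..k. of_nat d ^ n * x^d)
     = (\<Sum>i=0..n. of_int (eulerian n (int i)) * x^i)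
       - x^(k+1) * (\<Sum>i=0..n. of_int (eulerian_k (int k) n (int i)) * x^i)"
proof (induction k)
  case 0
  have "(\<Sum>i=0..n. of_int (eulerian_k (-1) n (int i)) * x^i)
     - x * (\<Sum>i=0..n. of_int (eulerian_k (-1+1) n (int i)) * x^i)
     = of_int ((-1+1)^n) * (1-x)^Suc n" by (rule L1)
  then show ?case by (simp add: eul_eq mult_ac)
next
  case (Suc k)
  have l: "(\<Sum>i=0..n. of_int (eulerian_k (int k) n (int i)) * x^i)
     - x * (\<Sum>i=0..n. of_int (eulerian_k (int k+1) n (int i)) * x^i)
     = of_int ((int k+1)^n) * (1-x)^Suc n" by (rule L1)
  have "(1-x)^Suc n * (\<Sum>d=0..Suc k. of_nat d ^ n * x^d)
      = (1-x)^Suc n * (\<Sum>d=0..k. of_nat d ^ n * x^d) + x^(k+1) * (of_int ((int k+1)^n) * (1-x)^Suc n)"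
    by (simp add: algebra_simps)
  also have "... = (\<Sum>i=0..n. of_int (eulerian n (int i)) * x^i)
       - x^(k+1) * (x * (\<Sum>i=0..n. of_int (eulerian_k (int k+1) n (int i)) * x^i))"
    unfolding Suc l[symmetric] by (simp add: algebra_simps)
  finally show ?case by (simp add: mult_ac add.commute)
qed

lemma main_field:
  fixes x :: "'a::field"
  assumes "x \<noteq> 1"
  shows "(\<Sum>d = 0..k. of_nat d ^ n * x ^ d) =
            (\<Sum>i = 0..n. (of_int (eulerian n (int i)) * x ^ i
                 - of_int (eulerian_k (int k) n (int i)) * x ^ (k + i + 1)) / (1 - x) ^ (n + 1))"
proof -
  have nz: "(1-x)^(n+1) \<noteq> 0" using assms by simp
  have "(\<Sum>i = 0..n. (of_int (eulerian n (int i)) * x ^ i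
                 - of_int (eulerian_k (int k) n (int i)) * x ^ (k + i + 1)) / (1 - x) ^ (n + 1))
     = ((\<Sum>i=0..n. of_int (eulerian n (int i)) * x^i)
       - x^(k+1) * (\<Sum>i=0..n. of_int (eulerian_k (int k) n (int i)) * x^i)) / (1 - x) ^ (n + 1)"
    unfolding sum_divide_distrib[symmetric] sum_subtractf sum_distrib_left
    by (simp add: power_add mult_ac)
  also have "... = (\<Sum>d=0..k. of_nat d ^ n * x^d)"
    unfolding main_ring[symmetric] using nz by simp
  finally show ?thesis by simp
qed

theorem proposition2p1:
  fixes n k :: nat
  shows "(\<forall>x :: real. x \<noteq> 1 \<longrightarrow>
            (\<Sum>d = 0..k. real d ^ n * x ^ d) =
            (\<Sum>i = 0..n. (of_int (eulerian n (int i)) * x ^ i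
                 - of_int (eulerian_k (int k) n (int i)) * x ^ (k + i + 1)) / (1 - x) ^ (n + 1)))
       \<and> (\<forall>x :: complex. x \<noteq> 1 \<longrightarrow>
            (\<Sum>d = 0..k. of_nat d ^ n * x ^ d) =
            (\<Sum>i = 0..n. (of_int (eulerian n (int i)) * x ^ i
                 - of_int (eulerian_k (int k) n (int i)) * x ^ (k + i + 1)) / (1 - x) ^ (n + 1)))"
  using main_field[where 'a=real] main_field[where 'a=complex] by blast

end
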